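(* Assume: (A1) $f(x,y)$ and each component of $g(x,y)$ are convex in $y$ for each fixed $x$, and $f,g$ are twice continuously differentiable; (A2) $Y\subseteq\mathbb{R}^m$ is a compact convex set with $\{y:\exists x\in X \text{ such that } g(x,y)\le 0\}\subseteq\mathrm{int}(Y)$; (A3) $F$ and $G$ are twice continuously differentiable; (R1) for each $x\in X$ there exists $y$ with $g(x,y)<0$; (R2) $X$ is compact and nonempty, and the constraint set $\{x:G(x)\le0\}$ satisfies MFCQ at each $x\in X$. If $\epsilon>0$ and $\mu\ge0$, then the constraint set $\mathcal{C}(\epsilon,\mu)$ of $\mathsf{DBP}(\epsilon,\mu)$ satisfies MFCQ at every point of $\mathcal{C}(\epsilon,\mu)$.
   Context: Let $F:\mathbb{R}^n\times\mathbb{R}^m\to\mathbb{R}$, $f:\mathbb{R}^n\times\mathbb{R}^m\to\mathbb{R}$, $g:\mathbb{R}^n\times\mathbb{R}^m\to\mathbb{R}^p$, $G:\mathbb{R}^n\to\mathbb{R}^q$; vector inequalities componentwise; $X=\{x:G(x)\le0\}$. For $\mu\ge0$, $h_\mu(\lambda,x)=\min_y\{\mu\|y\|^2+f(x,y)+\lambda^{\mathsf T}g(x,y):y\in Y\}$ with $Y$ from (A2). $\mathcal{C}(\epsilon,\mu)$ is the set of $(x,y,\lambda)$ satisfying the constraints $G(x)\le0$, $g(x,y)-\epsilon\le0$, $-\lambda\le0$, and $f(x,y)-h_\mu(\lambda,x)-\epsilon\le0$; $\mathsf{DBP}(\epsilon,\mu)$ is: minimize $F(x,y)$ over $\mathcal{C}(\epsilon,\mu)$.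 A constraint set $\{z:c_i(z)\le0,\ i=1,\dots,r\}$ satisfies MFCQ at a feasible $\overline{z}$ if, with $I=\{i:c_i(\overline{z})=0\}$, there exists a direction $d$ such that $v_i^{\mathsf T}d<0$ for all $i\in I$ and all choices $v_i\in\partial c_i(\overline{z})$, where $\partial$ is the (limiting) subgradient of variational analysis (equal to $\{\nabla c_i(\overline{z})\}$ for continuously differentiable $c_i$). *)

theory Defs
  imports "HOL-Analysis.Analysis"
begin

definition C2 :: "('a::euclidean_space \<Rightarrow> 'b::euclidean_space) \<Rightarrow> bool" where
  "C2 \<phi> \<longleftrightarrow> (\<exists>(D :: 'a \<Rightarrow> ('a \<Rightarrow>\<^sub>L 'b)) (D2 :: 'a \<Rightarrow> ('a \<Rightarrow>\<^sub>L ('a \<Rightarrow>\<^sub>L 'b))).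
      (\<forall>z. (\<phi> has_derivative blinfun_apply (D z)) (at z)) \<and>
      (\<forall>z. (D has_derivative blinfun_apply (D2 z)) (at z)) \<and>
      continuous_on UNIV D2)"

definition frechet_subdiff :: "('a::real_inner \<Rightarrow> real) \<Rightarrow> 'a \<Rightarrow> 'a set" where
  "frechet_subdiff c z = {v. \<forall>e>0. \<exists>\<delta>>0. \<forall>w. dist w z < \<delta> \<longrightarrow>
       c w \<ge> c z + inner v (w - z) - e * norm (w - z)}"

definition limiting_subdiff :: "('a::real_inner \<Rightarrow> real) \<Rightarrow> 'a \<Rightarrow> 'a set" where
  "limiting_subdiff c z = {v. \<exists>zs vs. zs \<longlonglongrightarrow> z \<and> (\<lambda>k. c (zs k)) \<longlonglongrightarrow> c z \<and>
       (\<forall>k. vs k \<in> frechet_subdiff c (zs k)) \<and> vs \<longlonglongrightarrow> v}"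

definition MFCQ :: "('i \<Rightarrow> 'a::real_inner \<Rightarrow> real) \<Rightarrow> 'a \<Rightarrow> bool" where
  "MFCQ cs zb \<longleftrightarrow> (\<exists>d. \<forall>i. cs i zb = 0 \<longrightarrow> (\<forall>v\<in>limiting_subdiff (cs i) zb. inner v d < 0))"

definition hmu :: "real \<Rightarrow> ('n \<Rightarrow> 'm \<Rightarrow> real) \<Rightarrow> ('n \<Rightarrow> 'm \<Rightarrow> real^'p)
     \<Rightarrow> ('m::real_normed_vector) set \<Rightarrow> real^'p \<Rightarrow> 'n \<Rightarrow> real" where
  "hmu \<mu> f g Y l x = Inf ((\<lambda>y. \<mu> * (norm y)^2 + f x y + inner l (g x y)) ` Y)"

datatype ('q,'p) cidx = CG 'q | Cg 'p | Cl 'p | Cv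

fun dbp_cons :: "('n \<Rightarrow> real^'q) \<Rightarrow> ('n \<Rightarrow> 'm \<Rightarrow> real) \<Rightarrow> ('n \<Rightarrow> 'm \<Rightarrow> real^'p)
     \<Rightarrow> ('m::real_normed_vector) set \<Rightarrow> real \<Rightarrow> real
     \<Rightarrow> ('q,'p) cidx \<Rightarrow> ('n \<times> 'm \<times> (real^'p)) \<Rightarrow> real" where
  "dbp_cons G f g Y \<epsilon> \<mu> (CG j) (x,y,l) = G x $ j"
| "dbp_cons G f g Y \<epsilon> \<mu> (Cg i) (x,y,l) = g x y $ i - \<epsilon>"
| "dbp_cons G f g Y \<epsilon> \<mu> (Cl i) (x,y,l) = - (l $ i)"
| "dbp_cons G f g Y \<epsilon> \<mu> Cv (x,y,l) = f x y - hmu \<mu> f g Y l x - \<epsilon>"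

definition dbp_set :: "('n \<Rightarrow> real^'q) \<Rightarrow> ('n \<Rightarrow> 'm \<Rightarrow> real) \<Rightarrow> ('n \<Rightarrow> 'm \<Rightarrow> real^'p)
     \<Rightarrow> ('m::real_normed_vector) set \<Rightarrow> real \<Rightarrow> real \<Rightarrow> ('n \<times> 'm \<times> (real^'p)) set" where
  "dbp_set G f g Y \<epsilon> \<mu> = {z. \<forall>i. dbp_cons G f g Y \<epsilon> \<mu> i z \<le> 0}"

end

theory Submission
  imports Defs
begin


lemma frac_lt1: "(a::real) \<ge> 0 \<Longrightarrow> a / (2*(a+1)) < 1"
  by (simp add: divide_less_eq)

lemma frechet_descent:
  fixes c :: "'a::real_inner \<Rightarrow> real"
  assumes r: "r > 0"
  and desc: "\<And>\<tau>. 0 < \<tau> \<Longrightarrow> \<tau> < r \<Longrightarrow> c (z + \<tau> *\<^sub>R d) \<le> c z - \<tau> * \<kappa>"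
  and w: "w \<in> frechet_subdiff c z"
  shows "inner w d \<le> - \<kappa>"
proof (rule ccontr)
  assume "\<not> inner w d \<le> - \<kappa>"
  hence pos: "inner w d + \<kappa> > 0" by simp
  define e where "e = (inner w d + \<kappa>) / (2 * (norm d + 1))"
  have nd: "2 * (norm d + 1) > 0" by (smt (verit) norm_ge_zero)
  have e: "e > 0" unfolding e_def using pos nd by (rule divide_pos_pos)
  obtain \<delta> where \<delta>: "\<delta> > 0" and fr: "\<And>u. dist u z < \<delta> \<Longrightarrow> c u \<ge> c z + inner w (u - z) - e * norm (u - z)"
    using w e unfolding frechet_subdiff_def by blast
  define \<tau> where "\<tau> = min (\<delta> / (2 * (norm d + 1))) (r/2)"
  have t0: "\<tau> > 0" unfolding \<tau>_def using \<delta> r nd by simp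
  have tr: "\<tau> < r" unfolding \<tau>_def using r by linarith
  have "\<tau> * norm d \<le> \<delta> / (2 * (norm d + 1)) * norm d"
    unfolding \<tau>_def by (intro mult_right_mono) auto
  also have "\<dots> < \<delta>"
  proof -
    have "\<delta> / (2 * (norm d + 1)) * norm d = \<delta> * (norm d / (2 * (norm d + 1)))" by simp
    also have "norm d / (2 * (norm d + 1)) < 1" by (rule frac_lt1) simp
    hence "\<delta> * (norm d / (2 * (norm d + 1))) < \<delta> * 1" using \<delta> by (intro mult_strict_left_mono) auto
    finally show ?thesis by simp
  qed
  finally have "dist (z + \<tau> *\<^sub>R d) z < \<delta>" using t0 by (simp add: dist_norm)
  from fr[OF this] have "c (z + \<tau> *\<^sub>R d) \<ge> c z + \<tau> * inner w d - e * (\<tau> * norm d)"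
    using t0 by (simp add: inner_scaleR_right)
  with desc[OF t0 tr] have "\<tau> * (inner w d + \<kappa>) \<le> \<tau> * (e * norm d)" by (simp add: algebra_simps)
  hence le: "inner w d + \<kappa> \<le> e * norm d" using t0 by simp
  have "e * norm d = (inner w d + \<kappa>) * (norm d / (2 * (norm d + 1)))" unfolding e_def by simp
  also have "\<dots> < (inner w d + \<kappa>) * 1"
    using pos by (intro mult_strict_left_mono frac_lt1) auto
  finally show False using le by simp
qed

lemma lim_subdiff_descent:
  fixes c :: "'a::real_inner \<Rightarrow> real"
  assumes r: "r > 0"
  and desc: "\<And>z' \<tau>. dist z' z0 < r \<Longrightarrow> 0 < \<tau> \<Longrightarrow> \<tau> < r \<Longrightarrow> c (z' + \<tau> *\<^sub>R d) \<le> c z' - \<tau> * \<kappa>"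
  and v: "v \<in> limiting_subdiff c z0"
  shows "inner v d \<le> - \<kappa>"
proof -
  obtain zs vs where zs: "zs \<longlonglongrightarrow> z0" and fr: "\<And>k. vs k \<in> frechet_subdiff c (zs k)" and vs: "vs \<longlonglongrightarrow> v"
    using v unfolding limiting_subdiff_def by blast
  have "eventually (\<lambda>k. dist (zs k) z0 < r) sequentially"
    using zs r by (simp add: tendsto_iff)
  then obtain N where N: "\<And>k. k \<ge> N \<Longrightarrow> dist (zs k) z0 < r" by (auto simp: eventually_sequentially)
  have "\<And>k. k \<ge> N \<Longrightarrow> inner (vs k) d \<le> -\<kappa>"
    by (rule frechet_descent[OF r _ fr]) (use N desc in auto)
  moreover have "(\<lambda>k. inner (vs k) d) \<longlonglongrightarrow> inner v d"
    by (intro tendsto_intros vs)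
  ultimately show ?thesis by (intro LIMSEQ_le_const2) auto
qed

lemma grad_in_lim:
  fixes \<phi> :: "'a::real_inner \<Rightarrow> real"
  assumes der: "(\<phi> has_derivative \<phi>') (at z)" and rep: "\<And>w. \<phi>' w = inner v w"
  shows "v \<in> limiting_subdiff \<phi> z"
proof -
  have "v \<in> frechet_subdiff \<phi> z"
    unfolding frechet_subdiff_def
  proof (intro CollectI allI impI)
    fix e :: real assume e: "e > 0"
    then obtain \<delta> where \<delta>: "\<delta> > 0" and h: "\<And>y. norm (y - z) < \<delta> \<Longrightarrow> norm (\<phi> y - \<phi> z - \<phi>' (y - z)) \<le> e * norm (y - z)"
      using der unfolding has_derivative_at_alt by blast
    show "\<exists>\<delta>>0. \<forall>w. dist w z < \<delta> \<longrightarrow> \<phi> w \<ge> \<phi> z + inner v (w - z) - e * norm (w - z)"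
    proof (intro exI[of _ \<delta>] conjI allI impI \<delta>)
      fix w assume "dist w z < \<delta>"
      hence "norm (\<phi> w - \<phi> z - \<phi>' (w - z)) \<le> e * norm (w - z)" using h by (simp add: dist_norm)
      thus "\<phi> w \<ge> \<phi> z + inner v (w - z) - e * norm (w - z)" using rep[of "w - z"] by auto
    qed
  qed
  thus ?thesis unfolding limiting_subdiff_def
    by (intro CollectI exI[of _ "\<lambda>_. z"] exI[of _ "\<lambda>_. v"]) auto
qed


lemma C2_D:
  assumes "C2 \<Phi>"
  shows "\<exists>D. (\<forall>z. (\<Phi> has_derivative blinfun_apply (D z)) (at z)) \<and> continuous_on UNIV D"
proof -
  obtain D D2 where d1: "\<forall>z. (\<Phi> has_derivative blinfun_apply (D z)) (at z)"
    and d2: "\<forall>z. (D has_derivative blinfun_apply (D2 z)) (at z)"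
    using assms unfolding C2_def by blast
  have "continuous_on UNIV D"
    using d2 by (intro continuous_at_imp_continuous_on ballI has_derivative_continuous) auto
  with d1 show ?thesis by blast
qed

lemma C2_cont:
  assumes "C2 \<Phi>" shows "continuous_on UNIV \<Phi>"
proof -
  obtain D where d1: "\<forall>z. (\<Phi> has_derivative blinfun_apply (D z)) (at z)"
    using C2_D[OF assms] by blast
  thus ?thesis by (intro continuous_at_imp_continuous_on ballI has_derivative_continuous) auto
qed

lemma cont_bound:
  fixes \<phi> :: "'a::topological_space \<Rightarrow> 'b::real_normed_vector"
  assumes "continuous_on S \<phi>" "compact S"
  shows "\<exists>B\<ge>0. \<forall>p\<in>S. norm (\<phi> p) \<le> B"
proof -
  have "bounded (\<phi> ` S)" by (intro compact_imp_bounded compact_continuous_image assms)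
  then obtain B where "\<forall>x\<in>\<phi> ` S. norm x \<le> B" unfolding bounded_iff by blast
  thus ?thesis by (intro exI[of _ "max B 0"]) force
qed

lemma lip_on:
  fixes \<Phi> :: "'a::euclidean_space \<Rightarrow> 'b::euclidean_space"
  assumes der: "\<forall>z. (\<Phi> has_derivative blinfun_apply (D z)) (at z)" and cD: "continuous_on UNIV D"
    and S: "convex S" "compact S"
  shows "\<exists>M\<ge>0. \<forall>p\<in>S. \<forall>q\<in>S. norm (\<Phi> p - \<Phi> q) \<le> M * norm (p - q)"
proof -
  obtain B where B: "B \<ge> 0" "\<forall>p\<in>S. norm (D p) \<le> B"
    using cont_bound[OF continuous_on_subset[OF cD] S(2)] by blast
  have "\<forall>p\<in>S. \<forall>q\<in>S. norm (\<Phi> p - \<Phi> q) \<le> B * norm (p - q)"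
  proof (intro ballI)
    fix p q assume "p \<in> S" "q \<in> S"
    show "norm (\<Phi> p - \<Phi> q) \<le> B * norm (p - q)"
      by (rule differentiable_bound[OF S(1), where f' = "\<lambda>z. blinfun_apply (D z)"])
        (use der B \<open>p \<in> S\<close> \<open>q \<in> S\<close> in \<open>auto intro: has_derivative_at_withinI simp: norm_blinfun.rep_eq[symmetric]\<close>)
  qed
  with B show ?thesis by blast
qed

lemma C2_lip:
  fixes \<Phi> :: "'a::euclidean_space \<Rightarrow> 'b::euclidean_space"
  assumes "C2 \<Phi>" "convex S" "compact S"
  shows "\<exists>M\<ge>0. \<forall>p\<in>S. \<forall>q\<in>S. norm (\<Phi> p - \<Phi> q) \<le> M * norm (p - q)"
  using C2_D[OF assms(1)] lip_on assms(2,3) by blast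

lemma norm_pair_diff1: "norm ((a::'a::real_normed_vector, b::'b::real_normed_vector) - (c, b)) = norm (a - c)"
  by (simp add: norm_Pair)

lemma inf_le_shift:
  fixes A B :: "'a \<Rightarrow> real"
  assumes "Y \<noteq> {}" "bdd_below (A ` Y)" "bdd_below (B ` Y)" "\<And>y. y \<in> Y \<Longrightarrow> A y \<le> B y + e"
  shows "Inf (A ` Y) \<le> Inf (B ` Y) + e"
proof -
  have "Inf (A ` Y) - e \<le> Inf (B ` Y)"
  proof (rule cInf_greatest)
    show "B ` Y \<noteq> {}" using assms by auto
    fix b assume "b \<in> B ` Y"
    then obtain y where y: "y \<in> Y" "b = B y" by auto
    have "Inf (A ` Y) \<le> A y" by (rule cInf_lower) (use y assms in auto)
    thus "Inf (A ` Y) - e \<le> b" using assms(4)[OF y(1)] y by simp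
  qed
  thus ?thesis by simp
qed

lemma cont_slice:
  assumes "continuous_on UNIV (\<lambda>(x,y). f x y)"
  shows "continuous_on UNIV (\<lambda>y. f x y)"
  using continuous_on_compose2[OF assms, of UNIV "\<lambda>y. (x,y)"]
  by (simp add: continuous_on_Pair continuous_on_const continuous_on_id)


context
  fixes f :: "real^'n \<Rightarrow> real^'m \<Rightarrow> real" and g :: "real^'n \<Rightarrow> real^'m \<Rightarrow> real^'p"
    and Y :: "(real^'m) set" and \<mu> :: real
  assumes sf: "C2 (\<lambda>(x,y). f x y)" and sg: "C2 (\<lambda>(x,y). g x y)"
    and cY: "compact Y" and Yne: "Y \<noteq> {}"
begin

lemma phi_cont: "continuous_on UNIV (\<lambda>y. \<mu> * (norm y)^2 + f x y + inner l (g x y))"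
  using cont_slice[OF C2_cont[OF sf], of x] cont_slice[OF C2_cont[OF sg], of x]
  by (intro continuous_intros) auto

lemma h_bdd: "bdd_below ((\<lambda>y. \<mu> * (norm y)^2 + f x y + inner l (g x y)) ` Y)"
  by (intro bounded_imp_bdd_below compact_imp_bounded compact_continuous_image
      continuous_on_subset[OF phi_cont] cY) auto

lemma h_lower: "y \<in> Y \<Longrightarrow> hmu \<mu> f g Y l x \<le> \<mu> * (norm y)^2 + f x y + inner l (g x y)"
  unfolding hmu_def by (rule cInf_lower) (auto intro: h_bdd)

lemma h_greatest: "(\<And>y. y \<in> Y \<Longrightarrow> c \<le> \<mu> * (norm y)^2 + f x y + inner l (g x y)) \<Longrightarrow> c \<le> hmu \<mu> f g Y l x"
  unfolding hmu_def by (rule cInf_greatest) (use Yne in auto)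

lemma h_concave:
  assumes t: "0 \<le> \<tau>" "\<tau> \<le> 1"
  shows "hmu \<mu> f g Y l x + \<tau> * (hmu \<mu> f g Y (l + dl) x - hmu \<mu> f g Y l x) \<le> hmu \<mu> f g Y (l + \<tau> *\<^sub>R dl) x"
proof (rule h_greatest)
  fix y assume y: "y \<in> Y"
  have e: "\<mu> * (norm y)^2 + f x y + inner (l + \<tau> *\<^sub>R dl) (g x y)
      = (1 - \<tau>) * (\<mu> * (norm y)^2 + f x y + inner l (g x y)) + \<tau> * (\<mu> * (norm y)^2 + f x y + inner (l + dl) (g x y))"
    by (simp add: inner_add_left algebra_simps)
  have "(1 - \<tau>) * hmu \<mu> f g Y l x \<le> (1 - \<tau>) * (\<mu> * (norm y)^2 + f x y + inner l (g x y))"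
    using t h_lower[OF y] by (intro mult_left_mono) auto
  moreover have "\<tau> * hmu \<mu> f g Y (l + dl) x \<le> \<tau> * (\<mu> * (norm y)^2 + f x y + inner (l + dl) (g x y))"
    using t h_lower[OF y] by (intro mult_left_mono) auto
  ultimately show "hmu \<mu> f g Y l x + \<tau> * (hmu \<mu> f g Y (l + dl) x - hmu \<mu> f g Y l x)
      \<le> \<mu> * (norm y)^2 + f x y + inner (l + \<tau> *\<^sub>R dl) (g x y)"
    unfolding e by (simp add: algebra_simps)
qed

lemma h_lip:
  assumes Kx: "convex Kx" "compact Kx" and cvY: "convex Y" and B: "B \<ge> 0"
  shows "\<exists>C\<ge>0. \<forall>x\<in>Kx. \<forall>x'\<in>Kx. \<forall>l l'. norm l \<le> B \<longrightarrow> norm l' \<le> B \<longrightarrow>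
     \<bar>hmu \<mu> f g Y l x - hmu \<mu> f g Y l' x'\<bar> \<le> C * (norm (x - x') + norm (l - l'))"
proof -
  have S: "convex (Kx \<times> Y)" "compact (Kx \<times> Y)"
    using Kx cvY cY by (auto intro: convex_Times compact_Times)
  obtain Mf where Mf: "Mf \<ge> 0" "\<forall>p\<in>Kx \<times> Y. \<forall>q\<in>Kx \<times> Y. norm ((\<lambda>(x,y). f x y) p - (\<lambda>(x,y). f x y) q) \<le> Mf * norm (p - q)"
    using C2_lip[OF sf S] by blast
  obtain Mg where Mg: "Mg \<ge> 0" "\<forall>p\<in>Kx \<times> Y. \<forall>q\<in>Kx \<times> Y. norm ((\<lambda>(x,y). g x y) p - (\<lambda>(x,y). g x y) q) \<le> Mg * norm (p - q)"
    using C2_lip[OF sg S] by blast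
  obtain Bg where Bg: "Bg \<ge> 0" "\<forall>p\<in>Kx \<times> Y. norm ((\<lambda>(x,y). g x y) p) \<le> Bg"
    using cont_bound[OF continuous_on_subset[OF C2_cont[OF sg]] S(2)] by blast
  define C where "C = Mf + B * Mg + Bg"
  have C0: "C \<ge> 0" unfolding C_def using Mf Mg Bg B by simp
  have pw: "\<bar>(\<mu> * (norm y)^2 + f x y + inner l (g x y)) - (\<mu> * (norm y)^2 + f x' y + inner l' (g x' y))\<bar>
       \<le> C * (norm (x - x') + norm (l - l'))"
    if x: "x \<in> Kx" "x' \<in> Kx" and y: "y \<in> Y" and l: "norm l \<le> B" "norm l' \<le> B" for x x' y l l'
  proof -
    have "\<bar>f x y - f x' y\<bar> \<le> Mf * norm (x - x')"
      using Mf(2)[rule_format, of "(x,y)" "(x',y)"] x y by (simp add: norm_pair_diff1)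
    moreover have gd: "norm (g x y - g x' y) \<le> Mg * norm (x - x')"
      using Mg(2)[rule_format, of "(x,y)" "(x',y)"] x y by (simp add: norm_pair_diff1)
    moreover have gb: "norm (g x y) \<le> Bg" using Bg(2) x y by auto
    moreover have "inner l (g x y) - inner l' (g x' y) = inner (l - l') (g x y) + inner l' (g x y - g x' y)"
      by (simp add: inner_diff_left inner_diff_right)
    moreover have "\<bar>inner (l - l') (g x y)\<bar> \<le> norm (l - l') * Bg"
      using Cauchy_Schwarz_ineq2[of "l - l'" "g x y"] gb
      by (meson mult_left_mono norm_ge_zero order_trans)
    moreover have "\<bar>inner l' (g x y - g x' y)\<bar> \<le> B * (Mg * norm (x - x'))"
      using Cauchy_Schwarz_ineq2[of l' "g x y - g x' y"] gd l
      by (meson mult_mono norm_ge_zero order_trans B)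
    ultimately have "\<bar>(\<mu> * (norm y)^2 + f x y + inner l (g x y)) - (\<mu> * (norm y)^2 + f x' y + inner l' (g x' y))\<bar>
        \<le> Mf * norm (x - x') + norm (l - l') * Bg + B * (Mg * norm (x - x'))"
      by linarith
    also have "\<dots> \<le> C * (norm (x - x') + norm (l - l'))"
      unfolding C_def using Mf Mg Bg B
      by (simp add: algebra_simps add_mono mult_nonneg_nonneg)
    finally show ?thesis .
  qed
  have "\<forall>x\<in>Kx. \<forall>x'\<in>Kx. \<forall>(l::real^'p) l'. norm l \<le> B \<longrightarrow> norm l' \<le> B \<longrightarrow>
     \<bar>hmu \<mu> f g Y l x - hmu \<mu> f g Y l' x'\<bar> \<le> C * (norm (x - x') + norm (l - l'))"
  proof (intro ballI allI impI)
    fix x x' and l l' :: "real^'p" assume x: "x \<in> Kx" "x' \<in> Kx" and l: "norm l \<le> B" "norm l' \<le> B"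
    have a: "hmu \<mu> f g Y l x \<le> hmu \<mu> f g Y l' x' + C * (norm (x - x') + norm (l - l'))"
      unfolding hmu_def by (rule inf_le_shift[OF Yne h_bdd h_bdd]) (use pw[OF x _ l] in force)
    have b: "hmu \<mu> f g Y l' x' \<le> hmu \<mu> f g Y l x + C * (norm (x' - x) + norm (l' - l))"
      unfolding hmu_def by (rule inf_le_shift[OF Yne h_bdd h_bdd]) (use pw[OF x(2,1) _ l(2,1)] in force)
    have b': "hmu \<mu> f g Y l' x' \<le> hmu \<mu> f g Y l x + C * (norm (x - x') + norm (l - l'))"
      using b by (simp only: norm_minus_commute[of x' x] norm_minus_commute[of l' l])
    from a b' show "\<bar>hmu \<mu> f g Y l x - hmu \<mu> f g Y l' x'\<bar> \<le> C * (norm (x - x') + norm (l - l'))" by linarith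
  qed
  with C0 show ?thesis by blast
qed

end


lemma lin_nonneg:
  fixes K a :: real
  assumes "\<And>M. M \<ge> 0 \<Longrightarrow> 0 \<le> K + a * M"
  shows "a \<ge> 0"
proof (rule ccontr)
  assume "\<not> a \<ge> 0" hence a: "a < 0" by simp
  define M where "M = (\<bar>K\<bar> + 1) / (- a)"
  have "M \<ge> 0" unfolding M_def using a by (intro divide_nonneg_pos) auto
  from assms[OF this] have "0 \<le> K + a * M" .
  moreover have "a * M = - (\<bar>K\<bar> + 1)" unfolding M_def using a by simp
  ultimately show False by linarith
qed

lemma sum_neg_one:
  fixes au gv :: "real^'p"
  assumes "\<forall>i. au $ i \<ge> 0" "\<forall>i. gv $ i < 0" "au \<noteq> 0"
  shows "inner au gv < 0"
proof -
  obtain i where i: "au $ i \<noteq> 0" using assms(3) by (auto simp: vec_eq_iff)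
  have ti: "au $ i * gv $ i < 0" using i assms(1,2) by (simp add: mult_pos_neg order_le_neq_trans)
  have "inner au gv = (\<Sum>j\<in>UNIV. au $ j * gv $ j)" by (simp add: inner_vec_def)
  also have "\<dots> = au $ i * gv $ i + (\<Sum>j\<in>UNIV - {i}. au $ j * gv $ j)"
    by (simp add: sum.remove)
  also have "(\<Sum>j\<in>UNIV - {i}. au $ j * gv $ j) \<le> 0"
    using assms(1,2) by (intro sum_nonpos) (simp add: mult_nonneg_nonpos less_imp_le)
  finally show ?thesis using ti by linarith
qed

context
  fixes f :: "real^'n \<Rightarrow> real^'m \<Rightarrow> real" and g :: "real^'n \<Rightarrow> real^'m \<Rightarrow> real^'p"
    and Y :: "(real^'m) set" and \<mu> :: real
  assumes sf: "C2 (\<lambda>(x,y). f x y)" and sg: "C2 (\<lambda>(x,y). g x y)"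
    and cY: "compact Y" and Yne: "Y \<noteq> {}"
begin

lemma duality:
  assumes cvY: "convex Y" and convf: "convex_on UNIV (f x0)"
    and convg: "\<forall>i. convex_on UNIV (\<lambda>y. g x0 y $ i)"
    and yh: "yh \<in> Y" "\<forall>i. g x0 yh $ i < 0" and eps: "\<epsilon> > 0" and mu: "\<mu> \<ge> 0"
  shows "\<exists>yt lt. (\<forall>i. g x0 yt $ i \<le> 0) \<and> (\<forall>i. lt $ i > 0) \<and> f x0 yt - hmu \<mu> f g Y lt x0 < \<epsilon>"
proof -
  define S where "S = {y\<in>Y. \<forall>i. g x0 y $ i \<le> 0}"
  have yhS: "yh \<in> S" unfolding S_def using yh by (auto simp: less_imp_le)
  have cf: "continuous_on UNIV (f x0)" using cont_slice[OF C2_cont[OF sf], of x0] by simp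
  have cg: "continuous_on UNIV (g x0)" using cont_slice[OF C2_cont[OF sg], of x0] by simp
  have bdd: "bdd_below (f x0 ` S)"
  proof -
    have "bdd_below (f x0 ` Y)"
      by (intro bounded_imp_bdd_below compact_imp_bounded compact_continuous_image
          continuous_on_subset[OF cf] cY) auto
    thus ?thesis unfolding S_def by (rule bdd_below_mono) auto
  qed
  define V where "V = Inf (f x0 ` S)"
  define c where "c = V - \<epsilon>/2"
  obtain yt where yt: "yt \<in> S" "f x0 yt < V + \<epsilon>/2"
    using cInf_lessD[of "f x0 ` S" "V + \<epsilon>/2"] yhS eps unfolding V_def by auto
  define A where "A = {(u::real^'p, t::real). \<exists>y\<in>Y. (\<forall>i. g x0 y $ i \<le> u $ i) \<and> f x0 y - c \<le> t}"
  have cvA: "convex A"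
    unfolding convex_alt
  proof (intro ballI allI impI)
    fix p q :: "(real^'p) \<times> real" and u :: real
    assume p: "p \<in> A" and q: "q \<in> A" and u: "0 \<le> u \<and> u \<le> 1"
    obtain u1 t1 y1 where p1: "p = (u1,t1)" "y1 \<in> Y" "\<forall>i. g x0 y1 $ i \<le> u1 $ i" "f x0 y1 - c \<le> t1"
      using p unfolding A_def by auto
    obtain u2 t2 y2 where q1: "q = (u2,t2)" "y2 \<in> Y" "\<forall>i. g x0 y2 $ i \<le> u2 $ i" "f x0 y2 - c \<le> t2"
      using q unfolding A_def by auto
    define y where "y = (1 - u) *\<^sub>R y1 + u *\<^sub>R y2"
    have yY: "y \<in> Y" unfolding y_def using cvY p1(2) q1(2) u by (simp add: convex_alt)
    have "\<forall>i. g x0 y $ i \<le> ((1 - u) *\<^sub>R u1 + u *\<^sub>R u2) $ i"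
    proof
      fix i
      have "g x0 y $ i \<le> (1 - u) * g x0 y1 $ i + u * g x0 y2 $ i"
        unfolding y_def using convex_onD[OF convg[rule_format, of i], of u y1 y2] u by auto
      also have "\<dots> \<le> (1 - u) * u1 $ i + u * u2 $ i"
        using p1(3) q1(3) u by (intro add_mono mult_left_mono) auto
      finally show "g x0 y $ i \<le> ((1 - u) *\<^sub>R u1 + u *\<^sub>R u2) $ i" by simp
    qed
    moreover have "f x0 y - c \<le> (1 - u) * t1 + u * t2"
    proof -
      have "f x0 y \<le> (1 - u) * f x0 y1 + u * f x0 y2"
        unfolding y_def using convex_onD[OF convf, of u y1 y2] u by auto
      moreover have "(1 - u) * (f x0 y1 - c) \<le> (1 - u) * t1" "u * (f x0 y2 - c) \<le> u * t2"
        using p1(4) q1(4) u by (auto intro: mult_left_mono)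
      ultimately show ?thesis by (simp add: algebra_simps)
    qed
    ultimately show "(1 - u) *\<^sub>R p + u *\<^sub>R q \<in> A"
      unfolding A_def p1(1) q1(1) using yY by auto
  qed
  have n0A: "0 \<notin> A"
  proof
    assume "0 \<in> A"
    then obtain y where y: "y \<in> Y" "\<forall>i. g x0 y $ i \<le> 0" "f x0 y - c \<le> 0"
      unfolding A_def zero_prod_def by auto
    hence "y \<in> S" unfolding S_def by auto
    hence "V \<le> f x0 y" unfolding V_def by (intro cInf_lower bdd) auto
    with y(3) eps show False unfolding c_def by simp
  qed
  obtain a where a: "a \<noteq> 0" "\<forall>x\<in>A. 0 \<le> inner a x"
    using separating_hyperplane_set_0[OF cvA n0A] by blast
  obtain au ta where aa: "a = (au, ta)" by (cases a)
  have inA: "(u, t) \<in> A" if "y \<in> Y" "\<forall>i. g x0 y $ i \<le> u $ i" "f x0 y - c \<le> t" for y u t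
    unfolding A_def using that by auto
  have ineq: "0 \<le> inner au u + ta * t" if "y \<in> Y" "\<forall>i. g x0 y $ i \<le> u $ i" "f x0 y - c \<le> t" for y u t
    using bspec[OF a(2) inA[OF that]] unfolding aa by (simp add: inner_real_def)
  have at0: "ta \<ge> 0"
  proof (rule lin_nonneg[of "inner au (g x0 yh) + ta * (f x0 yh - c)"])
    fix M :: real assume M: "M \<ge> 0"
    have "0 \<le> inner au (g x0 yh) + ta * (f x0 yh - c + M)" by (rule ineq[OF yh(1)]) (use M in auto)
    thus "0 \<le> inner au (g x0 yh) + ta * (f x0 yh - c) + ta * M" by (simp add: algebra_simps)
  qed
  have au0: "\<forall>i. au $ i \<ge> 0"
  proof
    fix i
    show "au $ i \<ge> 0"
    proof (rule lin_nonneg[of "inner au (g x0 yh) + ta * (f x0 yh - c)"])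
      fix M :: real assume M: "M \<ge> 0"
      have "0 \<le> inner au (g x0 yh + M *\<^sub>R axis i 1) + ta * (f x0 yh - c)"
        by (rule ineq[OF yh(1)]) (use M in \<open>auto simp: axis_def\<close>)
      thus "0 \<le> inner au (g x0 yh) + ta * (f x0 yh - c) + au $ i * M"
        by (simp add: inner_add_right inner_axis algebra_simps)
    qed
  qed
  have atp: "ta > 0"
  proof (rule ccontr)
    assume "\<not> ta > 0" hence ta: "ta = 0" using at0 by simp
    hence "au \<noteq> 0" using a(1) aa by (auto simp: zero_prod_def)
    hence "inner au (g x0 yh) < 0" using sum_neg_one au0 yh(2) by blast
    moreover have "0 \<le> inner au (g x0 yh) + ta * (f x0 yh - c)" by (rule ineq[OF yh(1)]) auto
    ultimately show False using ta by simp
  qed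
  define l where "l = (1/ta) *\<^sub>R au"
  have lY: "c \<le> f x0 y + inner l (g x0 y)" if y: "y \<in> Y" for y
  proof -
    have "0 \<le> inner au (g x0 y) + ta * (f x0 y - c)" by (rule ineq[OF y]) auto
    hence "0 \<le> (inner au (g x0 y) + ta * (f x0 y - c)) / ta" using atp by simp
    also have "\<dots> = inner l (g x0 y) + (f x0 y - c)" unfolding l_def using atp
      by (simp add: field_simps)
    finally show ?thesis by simp
  qed
  obtain Bg where Bg: "Bg \<ge> 0" "\<forall>y\<in>Y. norm (g x0 y) \<le> Bg"
    using cont_bound[OF continuous_on_subset[OF cg] cY] by blast
  define one :: "real^'p" where "one = (\<chi> i. 1)"
  define gap where "gap = \<epsilon> - (f x0 yt - c)"
  have gap: "gap > 0" unfolding gap_def c_def using yt by simp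
  define nB where "nB = norm one * Bg"
  have nB: "nB \<ge> 0" unfolding nB_def using Bg by simp
  define s where "s = min 1 (gap / (2 * (nB + 1)))"
  have s0: "s > 0" unfolding s_def using gap nB by simp
  have snB: "s * nB \<le> gap / 2"
  proof -
    have "s * nB \<le> gap / (2 * (nB + 1)) * nB" unfolding s_def using nB by (intro mult_right_mono) auto
    also have "\<dots> = gap / 2 * (nB / (nB + 1))" by simp
    also have "\<dots> \<le> gap / 2 * 1" using gap nB by (intro mult_left_mono) auto
    finally show ?thesis by simp
  qed
  define lt where "lt = l + s *\<^sub>R one"
  have ltp: "\<forall>i. lt $ i > 0"
    unfolding lt_def l_def one_def using au0 atp s0 by (simp add: add_nonneg_pos)
  have H: "c - gap / 2 \<le> hmu \<mu> f g Y lt x0"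
  proof (rule h_greatest[OF sf sg cY Yne])
    fix y assume y: "y \<in> Y"
    have "\<bar>inner (s *\<^sub>R one) (g x0 y)\<bar> \<le> norm (s *\<^sub>R one) * norm (g x0 y)" by (rule Cauchy_Schwarz_ineq2)
    also have "\<dots> \<le> s * norm one * Bg" using s0 Bg y by (simp add: mult_left_mono)
    finally have "inner (s *\<^sub>R one) (g x0 y) \<ge> - (s * nB)" unfolding nB_def by (simp add: mult.assoc)
    moreover have "\<mu> * (norm y)^2 \<ge> 0" using mu by simp
    moreover note lY[OF y] snB
    ultimately show "c - gap / 2 \<le> \<mu> * (norm y)^2 + f x0 y + inner lt (g x0 y)"
      unfolding lt_def by (simp add: inner_add_left)
  qed
  have "f x0 yt - hmu \<mu> f g Y lt x0 < \<epsilon>"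
  proof -
    have "f x0 yt - hmu \<mu> f g Y lt x0 \<le> f x0 yt - (c - gap / 2)" using H by linarith
    also have "\<dots> < \<epsilon>"
    proof -
      have e1: "f x0 yt - c = \<epsilon> - gap" unfolding gap_def by simp
      show ?thesis using e1 gap by linarith
    qed
    finally show ?thesis .
  qed
  moreover have "\<forall>i. g x0 yt $ i \<le> 0" using yt(1) unfolding S_def by auto
  ultimately show ?thesis using ltp by blast
qed

end


lemma gen_desc:
  fixes c :: "'a::real_normed_vector \<Rightarrow> real"
  assumes est: "\<And>z' \<tau>. dist z' z0 < 1 \<Longrightarrow> 0 < \<tau> \<Longrightarrow> \<tau> < 1 \<Longrightarrow> c (z' + \<tau> *\<^sub>R d) - c z' \<le> \<tau> * (a + \<Psi> z')"
    and cont: "\<And>z'. dist z' z0 < 1 \<Longrightarrow> \<Psi> z' \<le> \<Psi> z0 + K * dist z' z0"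
    and neg: "a + \<Psi> z0 < 0" and K: "K \<ge> 0"
  shows "\<exists>r>0. \<exists>\<kappa>>0. \<forall>z' \<tau>. dist z' z0 < r \<longrightarrow> 0 < \<tau> \<longrightarrow> \<tau> < r \<longrightarrow> c (z' + \<tau> *\<^sub>R d) \<le> c z' - \<tau> * \<kappa>"
proof -
  define m where "m = - (a + \<Psi> z0)"
  have m: "m > 0" unfolding m_def using neg by simp
  define r where "r = min 1 (m / (2 * (K + 1)))"
  have r: "r > 0" "r \<le> 1" unfolding r_def using m K by auto
  have Kr: "K * r \<le> m / 2"
  proof -
    have "K * r \<le> K * (m / (2 * (K + 1)))" unfolding r_def using K by (intro mult_left_mono) auto
    also have "\<dots> = m / 2 * (K / (K + 1))" by simp
    also have "\<dots> \<le> m / 2 * 1" using m K by (intro mult_left_mono) auto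
    finally show ?thesis by simp
  qed
  have "\<forall>z' \<tau>. dist z' z0 < r \<longrightarrow> 0 < \<tau> \<longrightarrow> \<tau> < r \<longrightarrow> c (z' + \<tau> *\<^sub>R d) \<le> c z' - \<tau> * (m/2)"
  proof (intro allI impI)
    fix z' \<tau> assume z: "dist z' z0 < r" and t: "0 < \<tau>" "\<tau> < r"
    have "K * dist z' z0 \<le> K * r" using K z by (intro mult_left_mono) auto
    hence "\<Psi> z' \<le> \<Psi> z0 + m / 2" using cont[of z'] z r Kr by linarith
    moreover have am: "a + \<Psi> z0 = - m" unfolding m_def by simp
    ultimately have "a + \<Psi> z' \<le> - (m/2)" by linarith
    hence "\<tau> * (a + \<Psi> z') \<le> \<tau> * (- (m/2))" using t by (intro mult_left_mono) auto
    moreover have "c (z' + \<tau> *\<^sub>R d) - c z' \<le> \<tau> * (a + \<Psi> z')" using est[of z' \<tau>] z t r by linarith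
    ultimately show "c (z' + \<tau> *\<^sub>R d) \<le> c z' - \<tau> * (m/2)" by simp
  qed
  moreover have "m/2 > 0" using m by simp
  ultimately show ?thesis using r by blast
qed

lemma C1_descent:
  fixes \<Phi> :: "'a::euclidean_space \<Rightarrow> real^'q"
  assumes der: "\<forall>z. (\<Phi> has_derivative blinfun_apply (D z)) (at z)" and cD: "continuous_on UNIV D"
    and neg: "D x0 w $ j < 0"
  shows "\<exists>r>0. \<exists>\<kappa>>0. \<forall>x' \<tau>. dist x' x0 < r \<longrightarrow> 0 < \<tau> \<longrightarrow> \<tau> < r \<longrightarrow> \<Phi> (x' + \<tau> *\<^sub>R w) $ j \<le> \<Phi> x' $ j - \<tau> * \<kappa>"
proof -
  define \<kappa> where "\<kappa> = - (D x0 w $ j) / 2"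
  have k: "\<kappa> > 0" unfolding \<kappa>_def using neg by simp
  have nw: "norm w + 1 > 0" by (smt (verit) norm_ge_zero)
  have "isCont D x0" using cD by (simp add: continuous_on_eq_continuous_at)
  then obtain \<delta> where \<delta>: "\<delta> > 0" and dD: "\<And>x. dist x x0 < \<delta> \<Longrightarrow> dist (D x) (D x0) < \<kappa> / (norm w + 1)"
    using k nw unfolding continuous_at_eps_delta by (metis divide_pos_pos)
  define r where "r = min 1 (\<delta> / (2 * (norm w + 1)))"
  have r: "r > 0" "r \<le> 1" unfolding r_def using \<delta> nw by auto
  have "\<forall>x' \<tau>. dist x' x0 < r \<longrightarrow> 0 < \<tau> \<longrightarrow> \<tau> < r \<longrightarrow> \<Phi> (x' + \<tau> *\<^sub>R w) $ j \<le> \<Phi> x' $ j - \<tau> * \<kappa>"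
  proof (intro allI impI)
    fix x' \<tau> assume x': "dist x' x0 < r" and t: "0 < \<tau>" "\<tau> < r"
    have slope: "D (x' + s *\<^sub>R w) w $ j \<le> - \<kappa>" if s: "0 \<le> s" "s \<le> \<tau>" for s
    proof -
      have "dist (x' + s *\<^sub>R w) x0 \<le> dist x' x0 + dist (x' + s *\<^sub>R w) x'"
        using dist_triangle[of "x' + s *\<^sub>R w" x0 x'] dist_commute[of x0 x'] by linarith
      also have "dist (x' + s *\<^sub>R w) x' = s * norm w" using s by (simp add: dist_norm)
      finally have "dist (x' + s *\<^sub>R w) x0 \<le> dist x' x0 + s * norm w" .
      also have "\<dots> \<le> r + r * norm w" using x' s t by (intro add_mono mult_right_mono) auto
      also have "\<dots> = r * (norm w + 1)" by (simp add: algebra_simps)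
      also have "\<dots> \<le> \<delta> / (2 * (norm w + 1)) * (norm w + 1)" unfolding r_def using nw
        by (intro mult_right_mono) auto
      also have "\<dots> = \<delta> / 2" using nw by (simp add: field_simps)
      also have "\<dots> < \<delta>" using \<delta> by simp
      finally have "dist (D (x' + s *\<^sub>R w)) (D x0) < \<kappa> / (norm w + 1)" using dD by simp
      hence nD: "norm (D (x' + s *\<^sub>R w) - D x0) \<le> \<kappa> / (norm w + 1)" by (simp add: dist_norm)
      have "\<bar>D (x' + s *\<^sub>R w) w $ j - D x0 w $ j\<bar> \<le> norm ((D (x' + s *\<^sub>R w) - D x0) w)"
        using component_le_norm_cart[of "(D (x' + s *\<^sub>R w) - D x0) w" j] by (simp add: blinfun.diff_left)
      also have "\<dots> \<le> norm (D (x' + s *\<^sub>R w) - D x0) * norm w" by (rule norm_blinfun)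
      also have "\<dots> \<le> \<kappa> / (norm w + 1) * norm w" using nD by (intro mult_right_mono) auto
      also have "\<dots> \<le> \<kappa>"
      proof -
        have "\<kappa> / (norm w + 1) * norm w = \<kappa> * (norm w / (norm w + 1))" by simp
        also have "\<dots> \<le> \<kappa> * 1" using k nw by (intro mult_left_mono) auto
        finally show ?thesis by simp
      qed
      finally show ?thesis unfolding \<kappa>_def by linarith
    qed
    define \<psi> where "\<psi> = (\<lambda>s. \<Phi> (x' + s *\<^sub>R w) $ j + s * \<kappa>)"
    have dpsi: "(\<psi> has_derivative (\<lambda>h. D (x' + s *\<^sub>R w) (h *\<^sub>R w) $ j + h * \<kappa>)) (at s within {0..\<tau>})" for s
    proof -
      have d1: "((\<lambda>s. x' + s *\<^sub>R w) has_derivative (\<lambda>h. h *\<^sub>R w)) (at s within {0..\<tau>})"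
        by (auto intro!: derivative_eq_intros)
      have d2: "(\<Phi> has_derivative blinfun_apply (D (x' + s *\<^sub>R w))) (at (x' + s *\<^sub>R w) within ((\<lambda>s. x' + s *\<^sub>R w) ` {0..\<tau>}))"
        using der by (auto intro: has_derivative_at_withinI)
      have d3: "((\<lambda>s. \<Phi> (x' + s *\<^sub>R w)) has_derivative (\<lambda>h. D (x' + s *\<^sub>R w) (h *\<^sub>R w))) (at s within {0..\<tau>})"
        using has_derivative_in_compose[OF d1 d2] by simp
      have d4: "((\<lambda>s. \<Phi> (x' + s *\<^sub>R w) $ j) has_derivative (\<lambda>h. D (x' + s *\<^sub>R w) (h *\<^sub>R w) $ j)) (at s within {0..\<tau>})"
        using bounded_linear.has_derivative[OF bounded_linear_vec_nth d3] by simp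
      show ?thesis unfolding \<psi>_def
        by (rule has_derivative_add[OF d4]) (auto intro!: derivative_eq_intros)
    qed
    obtain \<xi> where \<xi>: "\<xi> \<in> {0<..<\<tau>}" and eq: "\<psi> \<tau> - \<psi> 0 = D (x' + \<xi> *\<^sub>R w) ((\<tau> - 0) *\<^sub>R w) $ j + (\<tau> - 0) * \<kappa>"
      using mvt_simple[OF t(1), of \<psi>, OF dpsi] by blast
    have "D (x' + \<xi> *\<^sub>R w) (\<tau> *\<^sub>R w) $ j = \<tau> * D (x' + \<xi> *\<^sub>R w) w $ j"
      by (simp add: blinfun.scaleR_right)
    also have "\<dots> \<le> \<tau> * (- \<kappa>)" using slope[of \<xi>] \<xi> t by (intro mult_left_mono) auto
    finally have "\<psi> \<tau> - \<psi> 0 \<le> 0" using eq by simp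
    thus "\<Phi> (x' + \<tau> *\<^sub>R w) $ j \<le> \<Phi> x' $ j - \<tau> * \<kappa>" unfolding \<psi>_def by simp
  qed
  with r k show ?thesis by blast
qed


lemma dist3:
  fixes x' x0 :: "'a::real_normed_vector" and y' y0 :: "'b::real_normed_vector" and l' l0 :: "'c::real_normed_vector"
  shows "norm (x' - x0) \<le> dist (x',y',l') (x0,y0,l0) \<and> norm (y' - y0) \<le> dist (x',y',l') (x0,y0,l0)
     \<and> norm (l' - l0) \<le> dist (x',y',l') (x0,y0,l0)"
proof -
  have a: "dist x' x0 \<le> dist (x',y',l') (x0,y0,l0)" using dist_fst_le[of "(x',y',l')" "(x0,y0,l0)"] by simp
  have b: "dist (y',l') (y0,l0) \<le> dist (x',y',l') (x0,y0,l0)" using dist_snd_le[of "(x',y',l')" "(x0,y0,l0)"] by simp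
  have c: "dist y' y0 \<le> dist (y',l') (y0,l0)" using dist_fst_le[of "(y',l')" "(y0,l0)"] by simp
  have d: "dist l' l0 \<le> dist (y',l') (y0,l0)" using dist_snd_le[of "(y',l')" "(y0,l0)"] by simp
  show ?thesis using a b c d by (simp add: dist_norm)
qed

lemma in_cball_shift:
  fixes x' x0 dx :: "'a::real_normed_vector"
  assumes "norm (x' - x0) < 1" "0 \<le> \<tau>" "\<tau> \<le> 1" "1 + norm dx \<le> R"
  shows "x' + \<tau> *\<^sub>R dx \<in> cball x0 R"
proof -
  have "dist x0 (x' + \<tau> *\<^sub>R dx) = norm ((x' - x0) + \<tau> *\<^sub>R dx)"
    by (simp add: dist_norm norm_minus_commute algebra_simps)
  also have "\<dots> \<le> norm (x' - x0) + \<tau> * norm dx" using assms(2) by (metis norm_triangle_ineq norm_scaleR abs_of_nonneg)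
  also have "\<tau> * norm dx \<le> 1 * norm dx" using assms by (intro mult_right_mono) auto
  finally show ?thesis using assms by (simp add: mem_cball)
qed

lemma norm_shift:
  fixes l' l0 dl :: "'a::real_normed_vector"
  assumes "norm (l' - l0) < 1" "0 \<le> \<tau>" "\<tau> \<le> 1" "norm l0 + 1 + norm dl \<le> B"
  shows "norm (l' + \<tau> *\<^sub>R dl) \<le> B"
proof -
  have "norm (l' + \<tau> *\<^sub>R dl) \<le> norm l0 + norm (l' - l0) + \<tau> * norm dl"
    using assms(2) norm_triangle_ineq[of "l0 + (l' - l0)" "\<tau> *\<^sub>R dl"] norm_triangle_ineq[of l0 "l' - l0"]
    by simp
  also have "\<tau> * norm dl \<le> 1 * norm dl" using assms by (intro mult_right_mono) auto
  finally show ?thesis using assms by simp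
qed

lemma pair_norm_le: "norm ((a::'a::real_normed_vector, b::'b::real_normed_vector) - (c, d)) \<le> norm (a - c) + norm (b - d)"
  using norm_Pair_le[of "a - c" "b - d"] by simp

lemma Cv_desc:
  fixes f :: "real^'n \<Rightarrow> real^'m \<Rightarrow> real" and g :: "real^'n \<Rightarrow> real^'m \<Rightarrow> real^'p"
    and Y :: "(real^'m) set" and \<mu> \<epsilon> :: real and G :: "real^'n \<Rightarrow> real^'q"
    and x0 dx :: "real^'n" and y0 dy :: "real^'m" and l0 dl :: "real^'p"
  assumes sf: "C2 (\<lambda>(x,y). f x y)" and sg: "C2 (\<lambda>(x,y). g x y)"
    and cY: "compact Y" and Yne: "Y \<noteq> {}"
    and convf: "\<forall>x. convex_on UNIV (f x)"
    and Mf: "Mf \<ge> 0" "\<forall>p\<in>cball x0 Rx \<times> cball y0 Ry. \<forall>q\<in>cball x0 Rx \<times> cball y0 Ry.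
        norm ((\<lambda>(x,y). f x y) p - (\<lambda>(x,y). f x y) q) \<le> Mf * norm (p - q)"
    and Ch: "Ch \<ge> 0" "\<forall>x\<in>cball x0 Rx. \<forall>x'\<in>cball x0 Rx. \<forall>l l'. norm l \<le> Bl \<longrightarrow> norm l' \<le> Bl \<longrightarrow>
        \<bar>hmu \<mu> f g Y l x - hmu \<mu> f g Y l' x'\<bar> \<le> Ch * (norm (x - x') + norm (l - l'))"
    and Rx: "1 + norm dx \<le> Rx" and Ry: "1 + norm dy \<le> Ry" and Bl: "norm l0 + 1 + norm dl \<le> Bl"
    and act: "f x0 y0 - hmu \<mu> f g Y l0 x0 - \<epsilon> = 0"
    and neg: "norm dx * (Mf + Ch) + (f x0 (y0 + dy) - hmu \<mu> f g Y (l0 + dl) x0 - \<epsilon>) < 0"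
  shows "\<exists>r>0. \<exists>\<kappa>>0. \<forall>z' \<tau>. dist z' (x0,y0,l0) < r \<longrightarrow> 0 < \<tau> \<longrightarrow> \<tau> < r \<longrightarrow>
     dbp_cons G f g Y \<epsilon> \<mu> Cv (z' + \<tau> *\<^sub>R (dx,dy,dl)) \<le> dbp_cons G f g Y \<epsilon> \<mu> Cv z' - \<tau> * \<kappa>"
proof -
  define h where "h = hmu \<mu> f g Y"
  define \<Psi> where "\<Psi> = (\<lambda>z'::((real^'n) \<times> (real^'m) \<times> (real^'p)). f (fst z') (fst (snd z') + dy) - f (fst z') (fst (snd z'))
       - h (snd (snd z') + dl) (fst z') + h (snd (snd z')) (fst z'))"
  have fl: "\<bar>f a b - f c d\<bar> \<le> Mf * norm ((a,b) - (c,d))"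
    if "a \<in> cball x0 Rx" "b \<in> cball y0 Ry" "c \<in> cball x0 Rx" "d \<in> cball y0 Ry" for a b c d
    using Mf(2) that by fastforce
  have hl: "\<bar>h l x - h l' x'\<bar> \<le> Ch * (norm (x - x') + norm (l - l'))"
    if "x \<in> cball x0 Rx" "x' \<in> cball x0 Rx" "norm l \<le> Bl" "norm l' \<le> Bl" for x x' l l'
    using Ch(2) that unfolding h_def by blast
  show ?thesis
  proof (rule gen_desc[where a = "norm dx * (Mf + Ch)" and \<Psi> = \<Psi> and K = "4 * (Mf + Ch)"])
    show "0 \<le> 4 * (Mf + Ch)" using Mf Ch by simp
    show "norm dx * (Mf + Ch) + \<Psi> (x0, y0, l0) < 0"
      using neg act unfolding \<Psi>_def h_def by simp
  next
    fix z' :: "(real^'n) \<times> (real^'m) \<times> (real^'p)" and \<tau> :: real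
    assume z: "dist z' (x0, y0, l0) < 1" and t: "0 < \<tau>" "\<tau> < 1"
    obtain x' y' l' where z': "z' = (x',y',l')" by (cases z') auto
    have n: "norm (x' - x0) < 1" "norm (y' - y0) < 1" "norm (l' - l0) < 1"
      using dist3[of x' x0 y' l' y0 l0] z unfolding z' by linarith+
    define x1 where "x1 = x' + \<tau> *\<^sub>R dx"
    define y1 where "y1 = y' + \<tau> *\<^sub>R dy"
    define l1 where "l1 = l' + \<tau> *\<^sub>R dl"
    have mx: "x' \<in> cball x0 Rx" "x1 \<in> cball x0 Rx"
      using in_cball_shift[OF n(1), of 0 dx Rx] in_cball_shift[OF n(1), of \<tau> dx Rx] t Rx unfolding x1_def by auto
    have my: "y' \<in> cball y0 Ry" "y1 \<in> cball y0 Ry" "y' + dy \<in> cball y0 Ry"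
      using in_cball_shift[OF n(2), of 0 dy Ry] in_cball_shift[OF n(2), of \<tau> dy Ry]
        in_cball_shift[OF n(2), of 1 dy Ry] t Ry unfolding y1_def by auto
    have ml: "norm l' \<le> Bl" "norm l1 \<le> Bl" "norm (l' + dl) \<le> Bl"
      using norm_shift[OF n(3), of 0 dl Bl] norm_shift[OF n(3), of \<tau> dl Bl]
        norm_shift[OF n(3), of 1 dl Bl] t Bl unfolding l1_def by auto
    have i: "f x1 y1 - f x' y1 \<le> Mf * (\<tau> * norm dx)"
      using fl[OF mx(2) my(2) mx(1) my(2)] t unfolding x1_def by (simp add: norm_pair_diff1)
    have ii: "f x' y1 \<le> (1 - \<tau>) * f x' y' + \<tau> * f x' (y' + dy)"
    proof -
      have "(1 - \<tau>) *\<^sub>R y' + \<tau> *\<^sub>R (y' + dy) = y1" unfolding y1_def by (simp add: algebra_simps)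
      thus ?thesis using convex_onD[OF convf[rule_format, of x'], of \<tau> y' "y' + dy"] t by simp
    qed
    have iii: "h l1 x' - h l1 x1 \<le> Ch * (\<tau> * norm dx)"
      using hl[OF mx(1) mx(2) ml(2) ml(2)] t unfolding x1_def by simp
    have iv: "h l' x' + \<tau> * (h (l' + dl) x' - h l' x') \<le> h l1 x'"
      using h_concave[OF sf sg cY Yne, where \<tau>=\<tau> and l=l' and x=x' and dl=dl and \<mu>=\<mu>] t unfolding h_def l1_def by simp
    have "dbp_cons G f g Y \<epsilon> \<mu> Cv (z' + \<tau> *\<^sub>R (dx, dy, dl)) - dbp_cons G f g Y \<epsilon> \<mu> Cv z'
        = (f x1 y1 - h l1 x1 - \<epsilon>) - (f x' y' - h l' x' - \<epsilon>)"
      unfolding z' x1_def y1_def l1_def h_def by simp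
    also have "\<dots> \<le> Mf * (\<tau> * norm dx) + (\<tau> * f x' (y' + dy) - \<tau> * f x' y') + Ch * (\<tau> * norm dx)
        + (\<tau> * h l' x' - \<tau> * h (l' + dl) x')"
      using i ii iii iv by (simp add: algebra_simps)
    also have "\<dots> = \<tau> * (norm dx * (Mf + Ch) + \<Psi> z')"
      unfolding \<Psi>_def z' by (simp add: algebra_simps)
    finally show "dbp_cons G f g Y \<epsilon> \<mu> Cv (z' + \<tau> *\<^sub>R (dx, dy, dl)) - dbp_cons G f g Y \<epsilon> \<mu> Cv z'
        \<le> \<tau> * (norm dx * (Mf + Ch) + \<Psi> z')" .
  next
    fix z' :: "(real^'n) \<times> (real^'m) \<times> (real^'p)"
    assume z: "dist z' (x0, y0, l0) < 1"
    obtain x' y' l' where z': "z' = (x',y',l')" by (cases z') auto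
    define D where "D = dist z' (x0, y0, l0)"
    have nD: "norm (x' - x0) \<le> D" "norm (y' - y0) \<le> D" "norm (l' - l0) \<le> D"
      using dist3[of x' x0 y' l' y0 l0] unfolding D_def z' by auto
    have n: "norm (x' - x0) < 1" "norm (y' - y0) < 1" "norm (l' - l0) < 1"
      using nD z unfolding D_def by linarith+
    have n0: "norm (x0 - x0) < 1" "norm (y0 - y0) < 1" "norm (l0 - l0) < 1" by simp_all
    have mx: "x' \<in> cball x0 Rx" "x0 \<in> cball x0 Rx"
    proof -
      have a: "1 \<le> Rx" using Rx norm_ge_zero[of dx] by linarith
      hence "0 \<le> Rx" "1 + norm (0::real^'n) \<le> Rx" by simp_all
      thus "x' \<in> cball x0 Rx" "x0 \<in> cball x0 Rx" using in_cball_shift[OF n(1), of 0 0 Rx] by auto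
    qed
    have my: "y' \<in> cball y0 Ry" "y' + dy \<in> cball y0 Ry" "y0 + dy \<in> cball y0 Ry" "y0 \<in> cball y0 Ry"
      using in_cball_shift[OF n(2), of 0 dy Ry] in_cball_shift[OF n(2), of 1 dy Ry]
        in_cball_shift[OF n0(2), of 1 dy Ry] Ry
      by (auto simp: order_trans[OF zero_le_dist])
    have ml: "norm l' \<le> Bl" "norm (l' + dl) \<le> Bl" "norm (l0 + dl) \<le> Bl" "norm l0 \<le> Bl"
      using norm_shift[OF n(3), of 0 dl Bl] norm_shift[OF n(3), of 1 dl Bl]
        norm_shift[OF n0(3), of 1 dl Bl] norm_shift[OF n0(3), of 0 dl Bl] Bl by auto
    have a: "\<bar>f x' (y' + dy) - f x0 (y0 + dy)\<bar> \<le> Mf * (2 * D)"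
    proof -
      have "\<bar>f x' (y' + dy) - f x0 (y0 + dy)\<bar> \<le> Mf * norm ((x', y' + dy) - (x0, y0 + dy))"
        by (rule fl) (use mx my in auto)
      also have "\<dots> \<le> Mf * (norm (x' - x0) + norm (y' + dy - (y0 + dy)))"
        using Mf(1) pair_norm_le by (intro mult_left_mono) auto
      also have "\<dots> \<le> Mf * (2 * D)" using Mf(1) nD by (intro mult_left_mono) auto
      finally show ?thesis .
    qed
    have b: "\<bar>f x' y' - f x0 y0\<bar> \<le> Mf * (2 * D)"
    proof -
      have "\<bar>f x' y' - f x0 y0\<bar> \<le> Mf * norm ((x', y') - (x0, y0))"
        by (rule fl) (use mx my in auto)
      also have "\<dots> \<le> Mf * (norm (x' - x0) + norm (y' - y0))"
        using Mf(1) pair_norm_le by (intro mult_left_mono) auto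
      also have "\<dots> \<le> Mf * (2 * D)" using Mf(1) nD by (intro mult_left_mono) auto
      finally show ?thesis .
    qed
    have c: "\<bar>h (l' + dl) x' - h (l0 + dl) x0\<bar> \<le> Ch * (2 * D)"
    proof -
      have "\<bar>h (l' + dl) x' - h (l0 + dl) x0\<bar> \<le> Ch * (norm (x' - x0) + norm (l' + dl - (l0 + dl)))"
        by (rule hl) (use mx ml in auto)
      also have "\<dots> \<le> Ch * (2 * D)" using Ch(1) nD by (intro mult_left_mono) auto
      finally show ?thesis .
    qed
    have d: "\<bar>h l' x' - h l0 x0\<bar> \<le> Ch * (2 * D)"
    proof -
      have "\<bar>h l' x' - h l0 x0\<bar> \<le> Ch * (norm (x' - x0) + norm (l' - l0))"
        by (rule hl) (use mx ml in auto)
      also have "\<dots> \<le> Ch * (2 * D)" using Ch(1) nD by (intro mult_left_mono) auto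
      finally show ?thesis .
    qed
    have "\<Psi> z' - \<Psi> (x0, y0, l0) \<le> Mf * (2 * D) + Mf * (2 * D) + Ch * (2 * D) + Ch * (2 * D)"
    proof -
      have eq: "\<Psi> z' - \<Psi> (x0, y0, l0) = (f x' (y' + dy) - f x0 (y0 + dy)) - (f x' y' - f x0 y0)
         - (h (l' + dl) x' - h (l0 + dl) x0) + (h l' x' - h l0 x0)"
        unfolding \<Psi>_def z' by simp
      show ?thesis using a b c d unfolding eq abs_le_iff by linarith
    qed
    also have "\<dots> = 4 * (Mf + Ch) * D" by (simp add: algebra_simps)
    finally show "\<Psi> z' \<le> \<Psi> (x0, y0, l0) + 4 * (Mf + Ch) * dist z' (x0, y0, l0)" unfolding D_def by simp
  qed
qed


lemma Cg_desc:
  fixes f :: "real^'n \<Rightarrow> real^'m \<Rightarrow> real" and g :: "real^'n \<Rightarrow> real^'m \<Rightarrow> real^'p"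
    and Y :: "(real^'m) set" and \<mu> \<epsilon> :: real and G :: "real^'n \<Rightarrow> real^'q"
    and x0 dx :: "real^'n" and y0 dy :: "real^'m" and l0 dl :: "real^'p"
  assumes convg: "\<forall>x. convex_on UNIV (\<lambda>y. g x y $ i)"
    and Mg: "Mg \<ge> 0" "\<forall>p\<in>cball x0 Rx \<times> cball y0 Ry. \<forall>q\<in>cball x0 Rx \<times> cball y0 Ry.
        norm ((\<lambda>(x,y). g x y) p - (\<lambda>(x,y). g x y) q) \<le> Mg * norm (p - q)"
    and Rx: "1 + norm dx \<le> Rx" and Ry: "1 + norm dy \<le> Ry"
    and act: "g x0 y0 $ i - \<epsilon> = 0"
    and neg: "norm dx * Mg + (g x0 (y0 + dy) $ i - \<epsilon>) < 0"
  shows "\<exists>r>0. \<exists>\<kappa>>0. \<forall>z' \<tau>. dist z' (x0,y0,l0) < r \<longrightarrow> 0 < \<tau> \<longrightarrow> \<tau> < r \<longrightarrow>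
     dbp_cons G f g Y \<epsilon> \<mu> (Cg i) (z' + \<tau> *\<^sub>R (dx,dy,dl)) \<le> dbp_cons G f g Y \<epsilon> \<mu> (Cg i) z' - \<tau> * \<kappa>"
proof -
  define \<Psi> where "\<Psi> = (\<lambda>z'::(real^'n) \<times> (real^'m) \<times> (real^'p). g (fst z') (fst (snd z') + dy) $ i - g (fst z') (fst (snd z')) $ i)"
  have gl: "\<bar>g a b $ i - g c d $ i\<bar> \<le> Mg * norm ((a,b) - (c,d))"
    if "a \<in> cball x0 Rx" "b \<in> cball y0 Ry" "c \<in> cball x0 Rx" "d \<in> cball y0 Ry" for a b c d
  proof -
    have "\<bar>g a b $ i - g c d $ i\<bar> \<le> norm (g a b - g c d)"
      using component_le_norm_cart[of "g a b - g c d" i] by simp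
    also have "\<dots> \<le> Mg * norm ((a,b) - (c,d))" using Mg(2) that by fastforce
    finally show ?thesis .
  qed
  show ?thesis
  proof (rule gen_desc[where a = "norm dx * Mg" and \<Psi> = \<Psi> and K = "4 * Mg"])
    show "0 \<le> 4 * Mg" using Mg by simp
    show "norm dx * Mg + \<Psi> (x0, y0, l0) < 0"
      using neg act unfolding \<Psi>_def by simp
  next
    fix z' :: "(real^'n) \<times> (real^'m) \<times> (real^'p)" and \<tau> :: real
    assume z: "dist z' (x0, y0, l0) < 1" and t: "0 < \<tau>" "\<tau> < 1"
    obtain x' y' l' where z': "z' = (x',y',l')" by (cases z') auto
    have n: "norm (x' - x0) < 1" "norm (y' - y0) < 1"
      using dist3[of x' x0 y' l' y0 l0] z unfolding z' by linarith+
    define x1 where "x1 = x' + \<tau> *\<^sub>R dx"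
    define y1 where "y1 = y' + \<tau> *\<^sub>R dy"
    have mx: "x' \<in> cball x0 Rx" "x1 \<in> cball x0 Rx"
      using in_cball_shift[OF n(1), of 0 dx Rx] in_cball_shift[OF n(1), of \<tau> dx Rx] t Rx unfolding x1_def by auto
    have my: "y' \<in> cball y0 Ry" "y1 \<in> cball y0 Ry" "y' + dy \<in> cball y0 Ry"
      using in_cball_shift[OF n(2), of 0 dy Ry] in_cball_shift[OF n(2), of \<tau> dy Ry]
        in_cball_shift[OF n(2), of 1 dy Ry] t Ry unfolding y1_def by auto
    have i1: "g x1 y1 $ i - g x' y1 $ i \<le> Mg * (\<tau> * norm dx)"
      using gl[OF mx(2) my(2) mx(1) my(2)] t unfolding x1_def by (simp add: norm_pair_diff1)
    have ii: "g x' y1 $ i \<le> (1 - \<tau>) * g x' y' $ i + \<tau> * g x' (y' + dy) $ i"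
    proof -
      have "(1 - \<tau>) *\<^sub>R y' + \<tau> *\<^sub>R (y' + dy) = y1" unfolding y1_def by (simp add: algebra_simps)
      thus ?thesis using convex_onD[OF convg[rule_format, of x'], of \<tau> y' "y' + dy"] t by simp
    qed
    have "dbp_cons G f g Y \<epsilon> \<mu> (Cg i) (z' + \<tau> *\<^sub>R (dx, dy, dl)) - dbp_cons G f g Y \<epsilon> \<mu> (Cg i) z'
        = (g x1 y1 $ i - \<epsilon>) - (g x' y' $ i - \<epsilon>)"
      unfolding z' x1_def y1_def by simp
    also have "\<dots> \<le> Mg * (\<tau> * norm dx) + (\<tau> * g x' (y' + dy) $ i - \<tau> * g x' y' $ i)"
      using i1 ii by (simp add: algebra_simps)
    also have "\<dots> = \<tau> * (norm dx * Mg + \<Psi> z')"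
      unfolding \<Psi>_def z' by (simp add: algebra_simps)
    finally show "dbp_cons G f g Y \<epsilon> \<mu> (Cg i) (z' + \<tau> *\<^sub>R (dx, dy, dl)) - dbp_cons G f g Y \<epsilon> \<mu> (Cg i) z'
        \<le> \<tau> * (norm dx * Mg + \<Psi> z')" .
  next
    fix z' :: "(real^'n) \<times> (real^'m) \<times> (real^'p)"
    assume z: "dist z' (x0, y0, l0) < 1"
    obtain x' y' l' where z': "z' = (x',y',l')" by (cases z') auto
    define D where "D = dist z' (x0, y0, l0)"
    have nD: "norm (x' - x0) \<le> D" "norm (y' - y0) \<le> D"
      using dist3[of x' x0 y' l' y0 l0] unfolding D_def z' by auto
    have n: "norm (x' - x0) < 1" "norm (y' - y0) < 1"
      using nD z unfolding D_def by linarith+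
    have n0: "norm (x0 - x0) < 1" "norm (y0 - y0) < 1" by simp_all
    have mx: "x' \<in> cball x0 Rx" "x0 \<in> cball x0 Rx"
    proof -
      have a: "1 \<le> Rx" using Rx norm_ge_zero[of dx] by linarith
      hence "0 \<le> Rx" "1 + norm (0::real^'n) \<le> Rx" by simp_all
      thus "x' \<in> cball x0 Rx" "x0 \<in> cball x0 Rx" using in_cball_shift[OF n(1), of 0 0 Rx] by auto
    qed
    have my: "y' \<in> cball y0 Ry" "y' + dy \<in> cball y0 Ry" "y0 + dy \<in> cball y0 Ry" "y0 \<in> cball y0 Ry"
      using in_cball_shift[OF n(2), of 0 dy Ry] in_cball_shift[OF n(2), of 1 dy Ry]
        in_cball_shift[OF n0(2), of 1 dy Ry] Ry
      by (auto simp: order_trans[OF zero_le_dist])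
    have a: "\<bar>g x' (y' + dy) $ i - g x0 (y0 + dy) $ i\<bar> \<le> Mg * (2 * D)"
    proof -
      have "\<bar>g x' (y' + dy) $ i - g x0 (y0 + dy) $ i\<bar> \<le> Mg * norm ((x', y' + dy) - (x0, y0 + dy))"
        by (rule gl) (use mx my in auto)
      also have "\<dots> \<le> Mg * (norm (x' - x0) + norm (y' + dy - (y0 + dy)))"
        using Mg(1) pair_norm_le by (intro mult_left_mono) auto
      also have "\<dots> \<le> Mg * (2 * D)" using Mg(1) nD by (intro mult_left_mono) auto
      finally show ?thesis .
    qed
    have b: "\<bar>g x' y' $ i - g x0 y0 $ i\<bar> \<le> Mg * (2 * D)"
    proof -
      have "\<bar>g x' y' $ i - g x0 y0 $ i\<bar> \<le> Mg * norm ((x', y') - (x0, y0))"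
        by (rule gl) (use mx my in auto)
      also have "\<dots> \<le> Mg * (norm (x' - x0) + norm (y' - y0))"
        using Mg(1) pair_norm_le by (intro mult_left_mono) auto
      also have "\<dots> \<le> Mg * (2 * D)" using Mg(1) nD by (intro mult_left_mono) auto
      finally show ?thesis .
    qed
    have "\<Psi> z' - \<Psi> (x0, y0, l0) \<le> Mg * (2 * D) + Mg * (2 * D)"
    proof -
      have eq: "\<Psi> z' - \<Psi> (x0, y0, l0) = (g x' (y' + dy) $ i - g x0 (y0 + dy) $ i) - (g x' y' $ i - g x0 y0 $ i)"
        unfolding \<Psi>_def z' by simp
      show ?thesis using a b unfolding eq abs_le_iff by linarith
    qed
    also have "\<dots> \<le> 4 * Mg * D" using Mg(1) z unfolding D_def by (simp add: algebra_simps)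
    finally show "\<Psi> z' \<le> \<Psi> (x0, y0, l0) + 4 * Mg * dist z' (x0, y0, l0)" unfolding D_def by simp
  qed
qed


lemma desc_mfcq:
  fixes c :: "'a::real_inner \<Rightarrow> real"
  assumes "\<exists>r>0. \<exists>\<kappa>>0. \<forall>z' \<tau>. dist z' z0 < r \<longrightarrow> 0 < \<tau> \<longrightarrow> \<tau> < r \<longrightarrow> c (z' + \<tau> *\<^sub>R d) \<le> c z' - \<tau> * \<kappa>"
    and "v \<in> limiting_subdiff c z0"
  shows "inner v d < 0"
proof -
  obtain r \<kappa> where r: "r > 0" "\<kappa> > 0" and d: "\<forall>z' \<tau>. dist z' z0 < r \<longrightarrow> 0 < \<tau> \<longrightarrow> \<tau> < r \<longrightarrow> c (z' + \<tau> *\<^sub>R d) \<le> c z' - \<tau> * \<kappa>"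
    using assms(1) by blast
  have "inner v d \<le> - \<kappa>" by (rule lim_subdiff_descent[OF r(1) _ assms(2)]) (use d in blast)
  with r show ?thesis by simp
qed

theorem theorem3:
  fixes F f :: "real^'n \<Rightarrow> real^'m \<Rightarrow> real"
    and g :: "real^'n \<Rightarrow> real^'m \<Rightarrow> real^'p"
    and G :: "real^'n \<Rightarrow> real^'q"
    and X :: "(real^'n) set" and Y :: "(real^'m) set"
    and \<epsilon> \<mu> :: real
  assumes X_def: "X = {x. \<forall>j. G x $ j \<le> 0}"
    and A1_convf: "\<forall>x. convex_on UNIV (f x)"
    and A1_convg: "\<forall>x i. convex_on UNIV (\<lambda>y. g x y $ i)"
    and A1_smooth_f: "C2 (\<lambda>(x,y). f x y)"
    and A1_smooth_g: "C2 (\<lambda>(x,y). g x y)"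
    and A2_compact: "compact Y" and A2_convex: "convex Y"
    and A2_int: "{y. \<exists>x\<in>X. \<forall>i. g x y $ i \<le> 0} \<subseteq> interior Y"
    and A3_F: "C2 (\<lambda>(x,y). F x y)"
    and A3_G: "C2 G"
    and R1: "\<forall>x\<in>X. \<exists>y. \<forall>i. g x y $ i < 0"
    and R2_compact: "compact X" and R2_ne: "X \<noteq> {}"
    and R2_MFCQ: "\<forall>x\<in>X. MFCQ (\<lambda>j x. G x $ j) x"
    and eps: "\<epsilon> > 0" and mu: "\<mu> \<ge> 0"
  shows "\<forall>z\<in>dbp_set G f g Y \<epsilon> \<mu>. MFCQ (dbp_cons G f g Y \<epsilon> \<mu>) z"
proof
  fix z assume zC: "z \<in> dbp_set G f g Y \<epsilon> \<mu>"
  obtain x0 y0 l0 where z: "z = (x0,y0,l0)" by (cases z) auto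
  have feas: "\<And>i. dbp_cons G f g Y \<epsilon> \<mu> i (x0,y0,l0) \<le> 0" using zC unfolding dbp_set_def z by simp
  have fG: "G x0 $ j \<le> 0" for j using feas[of "CG j"] by simp
  have x0X: "x0 \<in> X" unfolding X_def using fG by simp
  obtain dG where dG: "\<forall>j. G x0 $ j = 0 \<longrightarrow> (\<forall>v\<in>limiting_subdiff (\<lambda>x. G x $ j) x0. inner v dG < 0)"
    using R2_MFCQ x0X unfolding MFCQ_def by blast
  obtain yh where yh: "\<forall>i. g x0 yh $ i < 0" using R1 x0X by blast
  have "yh \<in> {y. \<exists>x\<in>X. \<forall>i. g x y $ i \<le> 0}" using x0X yh less_imp_le by blast
  hence "yh \<in> interior Y" using A2_int by blast
  hence yhY: "yh \<in> Y" using interior_subset by blast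
  have Yne: "Y \<noteq> {}" using yhY by auto
  obtain yt lt where ytlt: "\<forall>i. g x0 yt $ i \<le> 0" "\<forall>i. lt $ i > 0" "f x0 yt - hmu \<mu> f g Y lt x0 < \<epsilon>"
    using duality[OF A1_smooth_f A1_smooth_g A2_compact Yne A2_convex A1_convf[rule_format, of x0]
        _ yhY yh eps mu] A1_convg by blast
  define dy where "dy = yt - y0"
  define dl where "dl = lt - l0"
  obtain DG where DG: "\<forall>z. (G has_derivative blinfun_apply (DG z)) (at z)" "continuous_on UNIV DG"
    using C2_D[OF A3_G] by blast
  have gradneg: "DG x0 dG $ j < 0" if act: "G x0 $ j = 0" for j
  proof -
    have lin: "linear (\<lambda>w. DG x0 w $ j)"
      by (rule bounded_linear.linear[OF bounded_linear_compose[OF bounded_linear_vec_nth blinfun.bounded_linear_right]])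
    define v where "v = adjoint (\<lambda>w. DG x0 w $ j) 1"
    have rep: "DG x0 w $ j = inner v w" for w
      using adjoint_works[OF lin, of w 1] unfolding v_def by (simp add: inner_commute)
    have der: "((\<lambda>x. G x $ j) has_derivative (\<lambda>w. DG x0 w $ j)) (at x0)"
      using bounded_linear.has_derivative[OF bounded_linear_vec_nth DG(1)[rule_format, of x0]] by simp
    have "v \<in> limiting_subdiff (\<lambda>x. G x $ j) x0" by (rule grad_in_lim[OF der rep])
    thus ?thesis using dG act rep by auto
  qed
  define Rx where "Rx = 1 + norm dG"
  define Ry where "Ry = 1 + norm dy"
  define Bl where "Bl = norm l0 + 1 + norm dl"
  have S1: "convex (cball x0 Rx \<times> cball y0 Ry)" "compact (cball x0 Rx \<times> cball y0 Ry)"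
    by (auto intro: convex_Times compact_Times)
  obtain Mf where Mf: "Mf \<ge> 0" "\<forall>p\<in>cball x0 Rx \<times> cball y0 Ry. \<forall>q\<in>cball x0 Rx \<times> cball y0 Ry.
        norm ((\<lambda>(x,y). f x y) p - (\<lambda>(x,y). f x y) q) \<le> Mf * norm (p - q)"
    using C2_lip[OF A1_smooth_f S1] by blast
  obtain Mg where Mg: "Mg \<ge> 0" "\<forall>p\<in>cball x0 Rx \<times> cball y0 Ry. \<forall>q\<in>cball x0 Rx \<times> cball y0 Ry.
        norm ((\<lambda>(x,y). g x y) p - (\<lambda>(x,y). g x y) q) \<le> Mg * norm (p - q)"
    using C2_lip[OF A1_smooth_g S1] by blast
  have Bl0: "Bl \<ge> 0" unfolding Bl_def by simp
  obtain Ch where Ch: "Ch \<ge> 0" "\<forall>x\<in>cball x0 Rx. \<forall>x'\<in>cball x0 Rx. \<forall>l l'. norm l \<le> Bl \<longrightarrow> norm l' \<le> Bl \<longrightarrow>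
        \<bar>hmu \<mu> f g Y l x - hmu \<mu> f g Y l' x'\<bar> \<le> Ch * (norm (x - x') + norm (l - l'))"
    using h_lip[OF A1_smooth_f A1_smooth_g A2_compact Yne convex_cball compact_cball A2_convex Bl0, where \<mu>=\<mu>]
    by blast
  define m0 where "m0 = min \<epsilon> (\<epsilon> - (f x0 yt - hmu \<mu> f g Y lt x0))"
  have m0: "m0 > 0" unfolding m0_def using eps ytlt(3) by simp
  define Q where "Q = norm dG * (Mf + Ch + Mg)"
  have Q0: "Q \<ge> 0" unfolding Q_def using Mf Mg Ch by simp
  define t where "t = min 1 (m0 / (2 * (Q + 1)))"
  have t: "t > 0" "t \<le> 1" unfolding t_def using m0 Q0 by auto
  have tQ: "t * Q \<le> m0 / 2"
  proof -
    have "t * Q \<le> m0 / (2 * (Q + 1)) * Q" unfolding t_def using Q0 by (intro mult_right_mono) auto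
    also have "\<dots> = m0 / 2 * (Q / (Q + 1))" by simp
    also have "\<dots> \<le> m0 / 2 * 1" using m0 Q0 by (intro mult_left_mono) auto
    finally show ?thesis by simp
  qed
  define dx where "dx = t *\<^sub>R dG"
  have ndx: "norm dx = t * norm dG" unfolding dx_def using t by simp
  have Rx: "1 + norm dx \<le> Rx"
  proof -
    have "t * norm dG \<le> 1 * norm dG" using t by (intro mult_right_mono) auto
    thus ?thesis unfolding Rx_def ndx by simp
  qed
  have Ry: "1 + norm dy \<le> Ry" unfolding Ry_def by simp
  have Bl: "norm l0 + 1 + norm dl \<le> Bl" unfolding Bl_def by simp
  have ndxf: "norm dx * (Mf + Ch) \<le> m0 / 2" and ndxg: "norm dx * Mg \<le> m0 / 2"
  proof -
    have "norm dx * (Mf + Ch) \<le> t * Q" unfolding ndx Q_def using t Mg Mf Ch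
      by (simp add: algebra_simps mult_nonneg_nonneg)
    thus "norm dx * (Mf + Ch) \<le> m0 / 2" using tQ by linarith
    have "norm dx * Mg \<le> t * Q" unfolding ndx Q_def using t Mg Mf Ch
      by (simp add: algebra_simps mult_nonneg_nonneg)
    thus "norm dx * Mg \<le> m0 / 2" using tQ by linarith
  qed
  have yt_eq: "y0 + dy = yt" unfolding dy_def by simp
  have lt_eq: "l0 + dl = lt" unfolding dl_def by simp
  show "MFCQ (dbp_cons G f g Y \<epsilon> \<mu>) z"
    unfolding MFCQ_def z
  proof (intro exI[of _ "(dx, dy, dl)"] allI impI ballI)
    fix i v
    assume act: "dbp_cons G f g Y \<epsilon> \<mu> i (x0, y0, l0) = 0"
      and v: "v \<in> limiting_subdiff (dbp_cons G f g Y \<epsilon> \<mu> i) (x0, y0, l0)"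
    show "inner v (dx, dy, dl) < 0"
    proof (cases i)
      case (CG j)
      have a: "G x0 $ j = 0" using act CG by simp
      have "DG x0 dx $ j = t * DG x0 dG $ j" unfolding dx_def by (simp add: blinfun.scaleR_right)
      also have "\<dots> < 0" using t gradneg[OF a] by (simp add: mult_pos_neg)
      finally have neg: "DG x0 dx $ j < 0" .
      obtain r \<kappa> where r: "r > 0" "\<kappa> > 0" and d: "\<forall>x' \<tau>. dist x' x0 < r \<longrightarrow> 0 < \<tau> \<longrightarrow> \<tau> < r \<longrightarrow> G (x' + \<tau> *\<^sub>R dx) $ j \<le> G x' $ j - \<tau> * \<kappa>"
        using C1_descent[OF DG neg] by blast
      have "\<forall>z' \<tau>. dist z' (x0,y0,l0) < r \<longrightarrow> 0 < \<tau> \<longrightarrow> \<tau> < r \<longrightarrow>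
          dbp_cons G f g Y \<epsilon> \<mu> i (z' + \<tau> *\<^sub>R (dx,dy,dl)) \<le> dbp_cons G f g Y \<epsilon> \<mu> i z' - \<tau> * \<kappa>"
      proof (intro allI impI)
        fix z' :: "(real^'n) \<times> (real^'m) \<times> (real^'p)" and \<tau> :: real
        assume z': "dist z' (x0, y0, l0) < r" and tt: "0 < \<tau>" "\<tau> < r"
        obtain x' y' l' where ze: "z' = (x',y',l')" by (cases z') auto
        have "dist x' x0 < r" using dist3[of x' x0 y' l' y0 l0] z' unfolding ze by (simp add: dist_norm)
        thus "dbp_cons G f g Y \<epsilon> \<mu> i (z' + \<tau> *\<^sub>R (dx,dy,dl)) \<le> dbp_cons G f g Y \<epsilon> \<mu> i z' - \<tau> * \<kappa>"
          using d tt unfolding ze CG by simp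
      qed
      hence "\<exists>r>0. \<exists>\<kappa>>0. \<forall>z' \<tau>. dist z' (x0,y0,l0) < r \<longrightarrow> 0 < \<tau> \<longrightarrow> \<tau> < r \<longrightarrow>
          dbp_cons G f g Y \<epsilon> \<mu> i (z' + \<tau> *\<^sub>R (dx,dy,dl)) \<le> dbp_cons G f g Y \<epsilon> \<mu> i z' - \<tau> * \<kappa>"
        using r by blast
      thus ?thesis using desc_mfcq v by blast
    next
      case (Cg k)
      have a: "g x0 y0 $ k - \<epsilon> = 0" using act Cg by simp
      have "g x0 yt $ k \<le> 0" using ytlt(1) by simp
      moreover have "m0 \<le> \<epsilon>" unfolding m0_def by simp
      ultimately have neg: "norm dx * Mg + (g x0 (y0 + dy) $ k - \<epsilon>) < 0"
        using ndxg m0 unfolding yt_eq by linarith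
      have cgk: "\<forall>x. convex_on UNIV (\<lambda>y. g x y $ k)" using A1_convg by blast
      have v': "v \<in> limiting_subdiff (dbp_cons G f g Y \<epsilon> \<mu> (Cg k)) (x0,y0,l0)" using v Cg by simp
      show ?thesis
        using desc_mfcq[OF Cg_desc[OF cgk Mg Rx Ry a neg] v'] by blast
    next
      case (Cl k)
      have a: "l0 $ k = 0" using act Cl by simp
      have "\<forall>z' \<tau>. dist z' (x0,y0,l0) < 1 \<longrightarrow> 0 < \<tau> \<longrightarrow> \<tau> < 1 \<longrightarrow>
          dbp_cons G f g Y \<epsilon> \<mu> i (z' + \<tau> *\<^sub>R (dx,dy,dl)) \<le> dbp_cons G f g Y \<epsilon> \<mu> i z' - \<tau> * (lt $ k)"
      proof (intro allI impI)
        fix z' :: "(real^'n) \<times> (real^'m) \<times> (real^'p)" and \<tau> :: real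
        obtain x' y' l' where ze: "z' = (x',y',l')" by (cases z') auto
        show "dbp_cons G f g Y \<epsilon> \<mu> i (z' + \<tau> *\<^sub>R (dx,dy,dl)) \<le> dbp_cons G f g Y \<epsilon> \<mu> i z' - \<tau> * (lt $ k)"
          unfolding ze Cl dl_def using a by (simp add: algebra_simps)
      qed
      moreover have "0 < lt $ k" using ytlt(2) by simp
      ultimately have "\<exists>r>0. \<exists>\<kappa>>0. \<forall>z' \<tau>. dist z' (x0,y0,l0) < r \<longrightarrow> 0 < \<tau> \<longrightarrow> \<tau> < r \<longrightarrow>
          dbp_cons G f g Y \<epsilon> \<mu> i (z' + \<tau> *\<^sub>R (dx,dy,dl)) \<le> dbp_cons G f g Y \<epsilon> \<mu> i z' - \<tau> * \<kappa>"
        by (intro exI[of _ 1]) auto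
      thus ?thesis using desc_mfcq v by blast
    next
      case Cv
      have a: "f x0 y0 - hmu \<mu> f g Y l0 x0 - \<epsilon> = 0" using act Cv by simp
      have "f x0 yt - hmu \<mu> f g Y lt x0 - \<epsilon> \<le> - m0" unfolding m0_def by simp
      hence neg: "norm dx * (Mf + Ch) + (f x0 (y0 + dy) - hmu \<mu> f g Y (l0 + dl) x0 - \<epsilon>) < 0"
        using ndxf m0 unfolding yt_eq lt_eq by linarith
      have v': "v \<in> limiting_subdiff (dbp_cons G f g Y \<epsilon> \<mu> Cv) (x0,y0,l0)" using v Cv by simp
      show ?thesis
        using desc_mfcq[OF Cv_desc[OF A1_smooth_f A1_smooth_g A2_compact Yne A1_convf Mf Ch Rx Ry Bl a neg] v']
        by blast
    qed
  qed
qed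


end
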